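(* In the Neutralization-Based Reclamation (NBR) scheme described in the context, no reclaimer thread ever reclaims (frees) an unsafe node; that is, no node freed by a reclaimer is subsequently accessed by any thread.
   Context: Setting: an asynchronous shared-memory system with a fixed set of threads operating on a linked concurrent data structure whose nodes are reached from a fixed set of entry points; a node that has been unlinked is retired by exactly one thread, and a node is unsafe for reclamation if some thread may still access it. NBR works as follows. Each thread has a private limbo bag of retired nodes, a thread-local atomic boolean flag restartable, and a row of a shared single-writer multi-reader array reservations (at most $r$ slots per thread). Each data structure operation consists of an optional preamble (no access to shared nodes), then one or more read phases each followed by a write phase. Immediately before a read phase the thread sets a checkpoint (via sigsetjmp); at the beginning of a read phase it clears its reservations and then stores true into restartable (sequentially consistent store); during a read phase it only reads, and only shared nodes discovered within that phase starting from an entry point. To end a read phase and enter the write phase, the thread writes pointers to all shared nodes it will access in the write phase into its reservation slots and then stores false into restartable (sequentially consistent store); in the write phase it accesses only nodes it reserved before entering the write phase, and on receipt of a signal it simply continues. On receipt of a neutralizing signal a thread runs a handler: if restartable is false it returns and continues; otherwise it jumps back (siglongjmp) to its last checkpoint, discarding all private references obtained in the read phase, and restarts the read phase from an entry point. A thread retires an unlinked node by appending it to its limbo bag; when the limbo bag exceeds a predetermined size threshold, the thread (a reclaimer) first sends a neutralizing signal to every participating thread, then scans the reservations of all threads, then frees every node in its limbo bag that is not reserved. Assumption: if a thread $T_i$ sends a signal to $T_j$, then by the time $T_i$ finishes sending it, $T_j$ has received it and will execute the signal handler before taking any further step of its program. *)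

theory Defs
  imports Main
begin

text \<open>
  Ent is the fixed set of entry-point nodes (never unlinked), r is the number of
  reservation slots per thread, thr the limbo-bag size threshold.
\<close>

text \<open>Program position of a thread (outside of reclamation):
  Idle: outside an operation / in a preamble (no access to shared nodes);
  Chk: checkpoint (sigsetjmp) set, about to start a read phase (clear reservations);
  Clr: reservations cleared, about to store true into restartable;
  Rd: in a read phase (restartable = true);
  Wr: in a write phase (restartable = false).\<close>
datatype mode = Idle | Chk | Clr | Rd | Wr

text \<open>Progress of a reclamation pass of a reclaimer: Sig S = the threads in S still have
  to be signalled; Scan S R = the reservations of the threads in S still have to be
  scanned, R is the set of reserved nodes seen so far.\<close>
datatype ('t, 'n) recl = Sig "'t set" | Scan "'t set" "'n set"

record ('t, 'n) nbr_state =
  mode  :: "'t \<Rightarrow> mode"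
  rst   :: "'t \<Rightarrow> bool"
  refs  :: "'t \<Rightarrow> 'n set"        \<comment> \<open>private references obtained in the current read phase\<close>
  resv  :: "'t \<Rightarrow> 'n set"
  snap  :: "'t \<Rightarrow> 'n set"        \<comment> \<open>nodes already unlinked when the current read phase began\<close>
  bag   :: "'t \<Rightarrow> 'n set"
  recl  :: "'t \<Rightarrow> ('t, 'n) recl option"
  unl   :: "'n set"
  ret   :: "'n set"
  freed :: "'n set"

datatype ('t, 'n) act =
    ABegin 't              \<comment> \<open>set checkpoint immediately before a read phase\<close>
  | AClear 't
  | AStartRead 't
  | ARead 't 'n 'n         \<comment> \<open>read node m (access), obtaining pointer n\<close>
  | AReserve 't 'n
  | AEnterWrite 't
  | AWrite 't 'n
  | AUnlink 't 'n
  | ARetire 't 'n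
  | AEnd 't
  | ASignal 't 't          \<comment> \<open>reclaimer sends neutralizing signal; handler runs at target\<close>
  | AScan 't 't
  | AFree 't

fun accesses :: "('t, 'n) act \<Rightarrow> 'n set" where
  "accesses (ARead t m n) = {m}"
| "accesses (AWrite t n) = {n}"
| "accesses _ = {}"

definition handler :: "'t \<Rightarrow> ('t, 'n) nbr_state \<Rightarrow> ('t, 'n) nbr_state" where
  "handler u s = (if rst s u
     then s\<lparr>mode := (mode s)(u := Chk), refs := (refs s)(u := {})\<rparr>
     else s)"

definition nbr_init :: "('t, 'n) nbr_state \<Rightarrow> bool" where
  "nbr_init s \<longleftrightarrow> (\<forall>t. mode s t = Idle \<and> \<not> rst s t \<and> refs s t = {} \<and> resv s t = {}
      \<and> bag s t = {} \<and> recl s t = None) \<and> unl s = {} \<and> ret s = {} \<and> freed s = {}"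

inductive nbr_step ::
  "'n set \<Rightarrow> nat \<Rightarrow> nat \<Rightarrow> ('t, 'n) nbr_state \<Rightarrow> ('t, 'n) act \<Rightarrow> ('t, 'n) nbr_state \<Rightarrow> bool"
  for Ent :: "'n set" and r :: nat and thr :: nat
where
  nbr_begin: "\<lbrakk>recl s t = None; mode s t \<in> {Idle, Wr}\<rbrakk> \<Longrightarrow>
     nbr_step Ent r thr s (ABegin t) (s\<lparr>mode := (mode s)(t := Chk)\<rparr>)"
| clear: "\<lbrakk>recl s t = None; mode s t = Chk\<rbrakk> \<Longrightarrow>
     nbr_step Ent r thr s (AClear t)
       (s\<lparr>mode := (mode s)(t := Clr), resv := (resv s)(t := {})\<rparr>)"
| start_read: "\<lbrakk>recl s t = None; mode s t = Clr\<rbrakk> \<Longrightarrow>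
     nbr_step Ent r thr s (AStartRead t)
       (s\<lparr>mode := (mode s)(t := Rd), rst := (rst s)(t := True),
          refs := (refs s)(t := {}), snap := (snap s)(t := unl s)\<rparr>)"
| read: "\<lbrakk>recl s t = None; mode s t = Rd; m \<in> Ent \<union> refs s t; n \<notin> snap s t\<rbrakk> \<Longrightarrow>
     nbr_step Ent r thr s (ARead t m n) (s\<lparr>refs := (refs s)(t := insert n (refs s t))\<rparr>)"
| reserve: "\<lbrakk>recl s t = None; mode s t = Rd; n \<in> Ent \<union> refs s t; card (resv s t) < r\<rbrakk> \<Longrightarrow>
     nbr_step Ent r thr s (AReserve t n) (s\<lparr>resv := (resv s)(t := insert n (resv s t))\<rparr>)"
| enter_write: "\<lbrakk>recl s t = None; mode s t = Rd\<rbrakk> \<Longrightarrow>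
     nbr_step Ent r thr s (AEnterWrite t)
       (s\<lparr>mode := (mode s)(t := Wr), rst := (rst s)(t := False), refs := (refs s)(t := {})\<rparr>)"
| nbr_write: "\<lbrakk>recl s t = None; mode s t = Wr; n \<in> resv s t\<rbrakk> \<Longrightarrow>
     nbr_step Ent r thr s (AWrite t n) s"
| unlink: "\<lbrakk>recl s t = None; mode s t = Wr; n \<notin> Ent; n \<notin> unl s\<rbrakk> \<Longrightarrow>
     nbr_step Ent r thr s (AUnlink t n) (s\<lparr>unl := insert n (unl s)\<rparr>)"
| retire: "\<lbrakk>recl s t = None; mode s t = Wr; n \<in> unl s; n \<notin> ret s\<rbrakk> \<Longrightarrow>
     nbr_step Ent r thr s (ARetire t n)
       (s\<lparr>bag := (bag s)(t := insert n (bag s t)), ret := insert n (ret s),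
          recl := (recl s)(t := (if card (insert n (bag s t)) > thr then Some (Sig UNIV) else None))\<rparr>)"
| nbr_finish: "\<lbrakk>recl s t = None; mode s t = Wr\<rbrakk> \<Longrightarrow>
     nbr_step Ent r thr s (AEnd t) (s\<lparr>mode := (mode s)(t := Idle)\<rparr>)"
| signal: "\<lbrakk>recl s t = Some (Sig S); u \<in> S\<rbrakk> \<Longrightarrow>
     nbr_step Ent r thr s (ASignal t u)
       (let s' = handler u s in
          s'\<lparr>recl := (recl s')(t := Some (if S - {u} = {} then Scan UNIV {} else Sig (S - {u})))\<rparr>)"
| scan: "\<lbrakk>recl s t = Some (Scan S R); u \<in> S\<rbrakk> \<Longrightarrow>
     nbr_step Ent r thr s (AScan t u)
       (s\<lparr>recl := (recl s)(t := Some (Scan (S - {u}) (R \<union> resv s u)))\<rparr>)"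
| nbr_free: "recl s t = Some (Scan {} R) \<Longrightarrow>
     nbr_step Ent r thr s (AFree t)
       (s\<lparr>freed := freed s \<union> (bag s t - R), bag := (bag s)(t := bag s t \<inter> R),
          recl := (recl s)(t := None)\<rparr>)"

end

theory Submission
  imports Defs
begin

definition RS :: "'n \<Rightarrow> ('t, 'n) nbr_state \<Rightarrow> 't \<Rightarrow> bool" where
  "RS n s u \<longleftrightarrow> n \<notin> refs s u \<and> (mode s u = Rd \<longrightarrow> n \<in> snap s u)"

fun rinv :: "'n \<Rightarrow> ('t, 'n) nbr_state \<Rightarrow> ('t, 'n) recl option \<Rightarrow> bool" where
  "rinv n s None = True"
| "rinv n s (Some (Sig S)) = (\<forall>u. u \<notin> S \<longrightarrow> RS n s u)"
| "rinv n s (Some (Scan S R)) = (\<forall>u. RS n s u \<and> (u \<notin> S \<longrightarrow> n \<in> resv s u \<longrightarrow> n \<in> R))"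

definition G :: "'n set \<Rightarrow> ('t, 'n) nbr_state \<Rightarrow> bool" where
  "G Ent s \<longleftrightarrow> (\<forall>u. mode s u = Rd \<longrightarrow> rst s u) \<and> (\<forall>u. refs s u \<noteq> {} \<longrightarrow> mode s u = Rd)
     \<and> (\<forall>t. bag s t \<subseteq> unl s) \<and> unl s \<inter> Ent = {}"

definition I :: "'n set \<Rightarrow> 'n \<Rightarrow> ('t, 'n) nbr_state \<Rightarrow> bool" where
  "I Ent n s \<longleftrightarrow> G Ent s \<and> (\<forall>t. n \<in> bag s t \<longrightarrow> rinv n s (recl s t))"

definition P :: "'n set \<Rightarrow> 'n \<Rightarrow> ('t, 'n) nbr_state \<Rightarrow> bool" where
  "P Ent n s \<longleftrightarrow> n \<in> unl s \<and> n \<notin> Ent \<and> (\<forall>u. RS n s u \<and> n \<notin> resv s u)"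

lemma G_step:
  assumes "G Ent s" "nbr_step Ent r thr s a s'"
  shows "G Ent s'"
  using assms(2,1)
proof (cases rule: nbr_step.cases)
  case (signal t S u)
  then show ?thesis using assms(1) by (auto simp: G_def handler_def Let_def)
next
  case (nbr_free t R)
  then show ?thesis using assms(1) by (auto simp: G_def)
qed (use assms(1) in \<open>auto simp: G_def\<close>)

lemma RS_step:
  assumes "RS n s u" "n \<in> unl s" "nbr_step Ent r thr s a s'"
  shows "RS n s' u"
  using assms(3,1,2)
proof (cases rule: nbr_step.cases)
  case (signal t S v)
  then show ?thesis using assms(1) by (auto simp: RS_def handler_def Let_def)
qed (use assms(1,2) in \<open>auto simp: RS_def\<close>)

lemma resv_step:
  assumes "nbr_step Ent r thr s a s'" "n \<in> resv s' u" "n \<notin> resv s u" "RS n s u" "n \<notin> Ent"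
  shows False
  using assms(1,2,3,4,5)
proof (cases rule: nbr_step.cases)
  case (signal t S v)
  then show ?thesis using assms by (auto simp: RS_def handler_def Let_def split: if_splits)
qed (use assms in \<open>auto simp: RS_def split: if_splits\<close>)

lemma unl_mono:
  assumes "nbr_step Ent r thr s a s'" shows "unl s \<subseteq> unl s'"
  using assms by (cases rule: nbr_step.cases) (auto simp: handler_def Let_def)

lemma handler_recl[simp]: "recl (handler u s) = recl s" "bag (handler u s) = bag s"
  "resv (handler u s) = resv s" "unl (handler u s) = unl s"
  by (simp_all add: handler_def)

lemma rinv_transfer:
  assumes "rinv n s \<rho>" "n \<in> unl s" "n \<notin> Ent" "nbr_step Ent r thr s a s'"
  shows "rinv n s' \<rho>"
proof (cases \<rho>)
  case None then show ?thesis by simp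
next
  case (Some x)
  then show ?thesis
  proof (cases x)
    case (Sig S)
    then show ?thesis using assms Some RS_step by fastforce
  next
    case (Scan S R)
    then show ?thesis using assms Some RS_step resv_step by fastforce
  qed
qed

lemma I_step:
  assumes "I Ent n s" "nbr_step Ent r thr s a s'"
  shows "I Ent n s'"
proof -
  have G: "G Ent s" using assms(1) by (simp add: I_def)
  have G': "G Ent s'" using G_step[OF G assms(2)] .
  have "rinv n s' (recl s' t)" if nb: "n \<in> bag s' t" for t
  proof -
    have tr: "rinv n s' (recl s' t)" if "n \<in> bag s t" "recl s' t = recl s t"
    proof -
      have "rinv n s (recl s t)" using assms(1) that by (simp add: I_def)
      moreover have "n \<in> unl s" "n \<notin> Ent" using G that by (force simp: G_def)+
      ultimately show ?thesis using rinv_transfer assms(2) that by metis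
    qed
    show ?thesis
      using assms(2)
    proof (cases rule: nbr_step.cases)
      case (retire t' m)
      show ?thesis
      proof (cases "t = t'")
        case True
        then show ?thesis using retire by auto
      next
        case False
        have "n \<in> bag s t" "recl s' t = recl s t" using retire nb False by auto
        then show ?thesis by (rule tr)
      qed
    next
      case (signal t' S u)
      show ?thesis
      proof (cases "t = t'")
        case False
        have "n \<in> bag s t" "recl s' t = recl s t"
          using nb signal False by (auto simp: handler_def Let_def split: if_splits)
        then show ?thesis by (rule tr)
      next
        case True
        have nb0: "n \<in> bag s t" using nb signal by (auto simp: handler_def Let_def split: if_splits)
        have ri: "\<forall>v. v \<notin> S \<longrightarrow> RS n s v" using assms(1) nb0 signal True by (auto simp: I_def)
        have nu: "n \<in> unl s" using G nb0 by (auto simp: G_def)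
        have rs': "RS n s' v" if "v \<notin> S" for v using RS_step[OF _ nu assms(2)] ri that by blast
        have rsu: "RS n s' u"
          using signal G by (auto simp: RS_def handler_def Let_def G_def split: if_splits)
        have rc: "recl s' t = Some (if S - {u} = {} then Scan UNIV {} else Sig (S - {u}))"
          using signal True by (simp add: Let_def handler_recl)
        show ?thesis
        proof (cases "S - {u} = {}")
          case True
          then have "v \<notin> S \<or> v = u" for v by blast
          then have "RS n s' v" for v using rs' rsu by blast
          then show ?thesis using rc True by simp
        next
          case False
          have "RS n s' v" if "v \<notin> S - {u}" for v using rs' rsu that by blast
          then show ?thesis using rc False by simp
        qed
      qed
    next
      case (scan t' S R u)
      show ?thesis
      proof (cases "t = t'")
        case False
        have "n \<in> bag s t" "recl s' t = recl s t" using nb scan False by auto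
        then show ?thesis by (rule tr)
      next
        case True
        have nb0: "n \<in> bag s t" using nb scan by auto
        have ri: "\<forall>v. RS n s v \<and> (v \<notin> S \<longrightarrow> n \<in> resv s v \<longrightarrow> n \<in> R)"
          using assms(1) nb0 scan True by (auto simp: I_def)
        have "RS n s' v" for v using ri scan by (simp add: RS_def)
        moreover have "recl s' t = Some (Scan (S - {u}) (R \<union> resv s u))" using scan True by simp
        moreover have "resv s' = resv s" using scan by simp
        moreover have "n \<in> R \<union> resv s u" if "v \<notin> S - {u}" "n \<in> resv s v" for v
          using ri that by (cases "v = u") auto
        ultimately show ?thesis by simp
      qed
    next
      case (nbr_free t' R)
      show ?thesis
      proof (cases "t = t'")
        case True
        then show ?thesis using nbr_free by simp
      next
        case False
        have "n \<in> bag s t" "recl s' t = recl s t" using nbr_free nb False by auto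
        then show ?thesis by (rule tr)
      qed
    qed (rule tr, use nb in simp, simp)+
  qed
  then show ?thesis using G' by (simp add: I_def)
qed

lemma I_init: "nbr_init s \<Longrightarrow> I Ent n s"
  by (simp add: nbr_init_def I_def G_def)

lemma freed_step:
  assumes "I Ent n s" "nbr_step Ent r thr s a s'" "n \<notin> freed s" "n \<in> freed s'"
  shows "P Ent n s'"
  using assms(2)
proof (cases rule: nbr_step.cases)
  case (nbr_free t R)
  have nb: "n \<in> bag s t" "n \<notin> R" using nbr_free assms(3,4) by auto
  have G: "G Ent s" and ri: "rinv n s (recl s t)" using assms(1) nb by (auto simp: I_def)
  have ri2: "\<forall>u. RS n s u \<and> (n \<in> resv s u \<longrightarrow> n \<in> R)" using ri nbr_free by simp
  have "n \<in> unl s" "n \<notin> Ent" using G nb by (force simp: G_def)+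
  then show ?thesis using ri2 nb nbr_free by (auto simp: P_def RS_def)
qed (use assms(3,4) in \<open>auto simp: Let_def handler_def split: if_splits\<close>)

lemma P_step:
  assumes "P Ent n s" "nbr_step Ent r thr s a s'"
  shows "P Ent n s'"
proof -
  have a: "n \<in> unl s" "n \<notin> Ent" "\<And>u. RS n s u" "\<And>u. n \<notin> resv s u" using assms(1) by (auto simp: P_def)
  have "n \<in> unl s'" using unl_mono[OF assms(2)] a by blast
  moreover have "RS n s' u" for u using RS_step[OF a(3) a(1) assms(2)] .
  moreover have "n \<notin> resv s' u" for u using resv_step[OF assms(2) _ a(4) a(3) a(2)] by blast
  ultimately show ?thesis using a by (simp add: P_def)
qed

lemma P_noacc:
  assumes "P Ent n s" "nbr_step Ent r thr s a s'"
  shows "n \<notin> accesses a"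
  using assms(2)
proof (cases rule: nbr_step.cases)
  case (read t m n')
  then show ?thesis using assms(1) by (auto simp: P_def RS_def)
next
  case (nbr_write t n')
  then show ?thesis using assms(1) by (auto simp: P_def)
qed auto

theorem lemma6:
  fixes Ent :: "'n set" and r thr k :: nat
    and \<sigma> :: "nat \<Rightarrow> ('t::finite, 'n) nbr_state" and \<alpha> :: "nat \<Rightarrow> ('t, 'n) act"
  assumes init: "nbr_init (\<sigma> 0)"
    and run: "\<forall>i<k. nbr_step Ent r thr (\<sigma> i) (\<alpha> i) (\<sigma> (Suc i))"
    and ij: "i < j" "j < k"
    and freed_at_i: "n \<notin> freed (\<sigma> i)" "n \<in> freed (\<sigma> (Suc i))"
  shows "n \<notin> accesses (\<alpha> j)"
proof -
  have Iall: "l \<le> k \<Longrightarrow> I Ent n (\<sigma> l)" for l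
  proof (induction l)
    case 0 then show ?case using I_init[OF init] by blast
  next
    case (Suc l)
    then have "l < k" by simp
    then have "nbr_step Ent r thr (\<sigma> l) (\<alpha> l) (\<sigma> (Suc l))" using run by blast
    moreover have "I Ent n (\<sigma> l)" using Suc \<open>l < k\<close> by simp
    ultimately show ?case by (rule I_step[rotated])
  qed
  have P1: "P Ent n (\<sigma> (Suc i))"
  proof -
    have "i < k" using ij by simp
    then have st: "nbr_step Ent r thr (\<sigma> i) (\<alpha> i) (\<sigma> (Suc i))" using run by blast
    have ii: "I Ent n (\<sigma> i)" using Iall \<open>i < k\<close> by simp
    show ?thesis by (rule freed_step[OF ii st freed_at_i])
  qed
  have Pall: "P Ent n (\<sigma> (Suc i + d))" if "Suc i + d \<le> k" for d
    using that
  proof (induction d)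
    case 0 then show ?case using P1 by simp
  next
    case (Suc d)
    have lt: "Suc i + d < k" using Suc.prems by simp
    then have p: "P Ent n (\<sigma> (Suc i + d))" using Suc.IH by simp
    have st: "nbr_step Ent r thr (\<sigma> (Suc i + d)) (\<alpha> (Suc i + d)) (\<sigma> (Suc (Suc i + d)))"
      using run lt by blast
    have "P Ent n (\<sigma> (Suc (Suc i + d)))" by (rule P_step[OF p st])
    then show ?case by simp
  qed
  define d where "d = j - Suc i"
  have d: "j = Suc i + d" using ij unfolding d_def by simp
  have "P Ent n (\<sigma> j)" using Pall[of d] d ij by simp
  moreover have "nbr_step Ent r thr (\<sigma> j) (\<alpha> j) (\<sigma> (Suc j))" using run ij by blast
  ultimately show ?thesis by (rule P_noacc)
qed

end
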